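(* If $H$ is a triangle-free simple graph and $k \geq 1$, then $\tau(I_k \vee H) \leq 2\nu(I_k \vee H)$.
   Context: $I_k$ is an independent set of $k$ vertices; the join $G_1\vee G_2$ is obtained from the disjoint union of $G_1,G_2$ by adding all edges between $V(G_1)$ and $V(G_2)$. $\tau(G)$ is the minimum size of an edge set $X$ with $G-X$ triangle-free; $\nu(G)$ is the maximum number of pairwise edge-disjoint triangles in $G$. *)

theory Defs
  imports Main
begin

definition simple_graph :: "'a set \<Rightarrow> 'a set set \<Rightarrow> bool" where
  "simple_graph V E \<longleftrightarrow> finite V \<and> (\<forall>e\<in>E. \<exists>u v. e = {u, v} \<and> u \<noteq> v \<and> u \<in> V \<and> v \<in> V)"

definition tri_edges :: "'a set \<Rightarrow> 'a set set" where
  "tri_edges t = {e. e \<subseteq> t \<and> card e = 2}"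

definition triangles :: "'a set set \<Rightarrow> 'a set set" where
  "triangles E = {t. finite t \<and> card t = 3 \<and> tri_edges t \<subseteq> E}"

definition triangle_free :: "'a set set \<Rightarrow> bool" where
  "triangle_free E \<longleftrightarrow> triangles E = {}"

definition tau :: "'a set set \<Rightarrow> nat" where
  "tau E = (LEAST n. \<exists>X. X \<subseteq> E \<and> card X = n \<and> triangle_free (E - X))"

definition edge_disjoint_triangles :: "'a set set \<Rightarrow> 'a set set \<Rightarrow> bool" where
  "edge_disjoint_triangles E T \<longleftrightarrow> T \<subseteq> triangles E \<and>
     (\<forall>s\<in>T. \<forall>t\<in>T. s \<noteq> t \<longrightarrow> tri_edges s \<inter> tri_edges t = {})"

definition nu :: "'a set set \<Rightarrow> nat" where
  "nu E = Max {card T | T. edge_disjoint_triangles E T}"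

definition join_vertices :: "'a set \<Rightarrow> 'b set \<Rightarrow> ('a + 'b) set" where
  "join_vertices V1 V2 = Inl ` V1 \<union> Inr ` V2"

definition join_edges :: "'a set \<Rightarrow> 'a set set \<Rightarrow> 'b set \<Rightarrow> 'b set set \<Rightarrow> ('a + 'b) set set" where
  "join_edges V1 E1 V2 E2 =
     (image Inl) ` E1 \<union> (image Inr) ` E2 \<union> {{Inl u, Inr v} | u v. u \<in> V1 \<and> v \<in> V2}"

text \<open>The independent set I_k on vertices {0..<k}, with no edges.\<close>
definition indep_vertices :: "nat \<Rightarrow> nat set" where
  "indep_vertices k = {0..<k}"

end

theory Submission
  imports Defs
begin

lemma reach_avoid:
  assumes "R\<^sup>*\<^sup>* a x" and uniq: "\<forall>y. R a y \<longrightarrow> y = a1" and "a1 \<noteq> a"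
  shows "x = a \<or> (\<lambda>x y. R x y \<and> x \<noteq> a \<and> y \<noteq> a)\<^sup>*\<^sup>* a1 x"
  using assms(1)
proof (induction rule: rtranclp_induct)
  case base then show ?case by simp
next
  case (step y z)
  show ?case
  proof (cases "z = a")
    case True then show ?thesis by simp
  next
    case False
    show ?thesis
    proof (cases "y = a")
      case True
      with step uniq have "z = a1" by auto
      then show ?thesis by simp
    next
      case False
      with step.IH have "(\<lambda>x y. R x y \<and> x \<noteq> a \<and> y \<noteq> a)\<^sup>*\<^sup>* a1 y" by simp
      moreover have "R y z \<and> y \<noteq> a \<and> z \<noteq> a" using step.hyps(2) False \<open>z \<noteq> a\<close> by simp
      ultimately show ?thesis by (simp add: rtranclp.rtrancl_into_rtrancl)
    qed
  qed
qed

lemma no_three_ends: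
  assumes "finite A" and "\<forall>x y. R x y \<longrightarrow> x \<in> A \<and> y \<in> A"
    and "\<forall>x. \<not> R x x" and "\<forall>x y. R x y \<longrightarrow> R y x"
    and "\<forall>x y z w. R x y \<and> R x z \<and> R x w \<longrightarrow> y = z \<or> y = w \<or> z = w"
    and "R a a1" and "\<forall>y. R a y \<longrightarrow> y = a1"
    and "b \<noteq> a" "c \<noteq> a" "b \<noteq> c"
    and "R\<^sup>*\<^sup>* a b" "R\<^sup>*\<^sup>* a c"
    and "\<forall>y z. R b y \<and> R b z \<longrightarrow> y = z"
    and "\<forall>y z. R c y \<and> R c z \<longrightarrow> y = z"
  shows False
  using assms
proof (induction "card A" arbitrary: A R a a1 b c rule: less_induct)
  case less
  let ?R' = "\<lambda>x y. R x y \<and> x \<noteq> a \<and> y \<noteq> a"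
  have aa1: "a1 \<noteq> a" using less.prems(3,6) by blast
  have b': "?R'\<^sup>*\<^sup>* a1 b" using reach_avoid[of R a b a1] less.prems aa1 by blast
  have c': "?R'\<^sup>*\<^sup>* a1 c" using reach_avoid[of R a c a1] less.prems aa1 by blast
  show False
  proof (cases "\<exists>a2. ?R' a1 a2")
    case False
    have "b = a1" using b' False by (cases rule: converse_rtranclpE) auto
    moreover have "c = a1" using c' False by (cases rule: converse_rtranclpE) auto
    ultimately show False using less.prems(10) by simp
  next
    case True
    then obtain a2 where a2: "?R' a1 a2" by blast
    have Ra1a: "R a1 a" using less.prems(4,6) by blast
    have u2: "\<forall>y. ?R' a1 y \<longrightarrow> y = a2"
      using less.prems(5) Ra1a a2 by metis
    have "b \<noteq> a1" using less.prems(13) Ra1a a2 by metis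
    have "c \<noteq> a1" using less.prems(14) Ra1a a2 by metis
    have aA: "a \<in> A" using less.prems(2,6) by blast
    have lt: "card (A - {a}) < card A" using aA less.prems(1) by (intro card_Diff1_less[OF less.prems(1) aA])
    show False
    proof (rule less.hyps[OF lt, of ?R' a1 a2 b c])
      show "finite (A - {a})" using less.prems(1) by simp
      show "\<forall>x y. ?R' x y \<longrightarrow> x \<in> A - {a} \<and> y \<in> A - {a}" using less.prems(2) by blast
      show "\<forall>x. \<not> ?R' x x" using less.prems(3) by blast
      show "\<forall>x y. ?R' x y \<longrightarrow> ?R' y x" using less.prems(4) by blast
      show "\<forall>x y z w. ?R' x y \<and> ?R' x z \<and> ?R' x w \<longrightarrow> y = z \<or> y = w \<or> z = w" using less.prems(5) by blast
      show "?R' a1 a2" by fact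
      show "\<forall>y. ?R' a1 y \<longrightarrow> y = a2" by fact
      show "b \<noteq> a1" by fact
      show "c \<noteq> a1" by fact
      show "b \<noteq> c" by fact
      show "?R'\<^sup>*\<^sup>* a1 b" by fact
      show "?R'\<^sup>*\<^sup>* a1 c" by fact
      show "\<forall>y z. ?R' b y \<and> ?R' b z \<longrightarrow> y = z" using less.prems(13) by blast
      show "\<forall>y z. ?R' c y \<and> ?R' c z \<longrightarrow> y = z" using less.prems(14) by blast
    qed
  qed
qed

lemma dcount:
  assumes "finite W" "finite A" "\<forall>e\<in>A. e \<subseteq> W \<and> card e = 2"
  shows "(\<Sum>w\<in>W. card {e\<in>A. w\<in>e}) = 2 * card A"
proof -
  have "(\<Sum>w\<in>W. card {e\<in>A. w\<in>e}) = (\<Sum>w\<in>W. \<Sum>e\<in>A. if w \<in> e then 1 else 0)"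
    using assms(2) by (simp add: sum.inter_filter[symmetric])
  also have "\<dots> = (\<Sum>e\<in>A. \<Sum>w\<in>W. if w \<in> e then 1 else 0)"
    by (rule sum.swap)
  also have "\<dots> = (\<Sum>e\<in>A. card {w\<in>W. w \<in> e})"
    using assms(1) by (simp add: sum.inter_filter[symmetric])
  also have "\<dots> = (\<Sum>e\<in>A. 2)"
  proof (rule sum.cong)
    fix e assume "e \<in> A"
    then have "{w\<in>W. w \<in> e} = e" using assms(3) by blast
    then show "card {w\<in>W. w \<in> e} = 2" using assms(3) \<open>e \<in> A\<close> by simp
  qed simp
  finally show ?thesis by simp
qed

definition validc :: "nat \<Rightarrow> 'a set set \<Rightarrow> 'a set set \<Rightarrow> ('a set \<Rightarrow> nat) \<Rightarrow> bool" where
  "validc k E F c \<longleftrightarrow> F \<subseteq> E \<and> (\<forall>e\<in>F. c e < k) \<and>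
      (\<forall>e\<in>F. \<forall>f\<in>F. e \<noteq> f \<and> e \<inter> f \<noteq> {} \<longrightarrow> c e \<noteq> c f)"

definition hasc :: "'a set set \<Rightarrow> ('a set \<Rightarrow> nat) \<Rightarrow> 'a \<Rightarrow> nat \<Rightarrow> bool" where
  "hasc F c v j \<longleftrightarrow> (\<exists>e\<in>F. v \<in> e \<and> c e = j)"

lemma sg_edge:
  assumes "simple_graph V E" "e \<in> E"
  obtains x y where "e = {x,y}" "x \<noteq> y" "x \<in> V" "y \<in> V"
  using assms unfolding simple_graph_def by blast

lemma sg_finite:
  assumes "simple_graph V E" shows "finite E"
proof -
  have sub: "E \<subseteq> Pow V"
  proof
    fix e assume "e \<in> E"
    then obtain x y where "e = {x,y}" "x \<in> V" "y \<in> V" using assms unfolding simple_graph_def by blast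
    then show "e \<in> Pow V" by simp
  qed
  have "finite V" using assms unfolding simple_graph_def by simp
  then have "finite (Pow V)" by simp
  then show ?thesis using finite_subset[OF sub] by simp
qed

locale maxcol =
  fixes V :: "'a set" and E :: "'a set set" and k :: nat and F :: "'a set set" and c :: "'a set \<Rightarrow> nat"
  assumes sg: "simple_graph V E"
    and val: "validc k E F c"
    and mx: "\<And>F' c'. validc k E F' c' \<Longrightarrow> card F' \<le> card F"
begin

lemma finE: "finite E" using sg_finite[OF sg] .
lemma FE: "F \<subseteq> E" using val unfolding validc_def by blast
lemma finF: "finite F" using finE FE finite_subset by blast
lemma finV: "finite V" using sg unfolding simple_graph_def by blast

lemma proper: "e \<in> F \<Longrightarrow> f \<in> F \<Longrightarrow> x \<in> e \<Longrightarrow> x \<in> f \<Longrightarrow> c e = c f \<Longrightarrow> e = f"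
  using val unfolding validc_def by blast

lemma add_edge:
  assumes "e \<in> E" "e \<notin> F" "e = {x,y}" "j < k" "\<not> hasc F c x j" "\<not> hasc F c y j"
  shows False
proof -
  have v: "validc k E (insert e F) (c(e:=j))"
    unfolding validc_def
  proof (intro conjI ballI impI)
    show "insert e F \<subseteq> E" using assms(1) FE by blast
  next
    fix f assume "f \<in> insert e F" then show "(c(e:=j)) f < k"
      using assms(4) val unfolding validc_def by (cases "f = e") auto
  next
    fix f g assume fg: "f \<in> insert e F" "g \<in> insert e F" "f \<noteq> g \<and> f \<inter> g \<noteq> {}"
    show "(c(e:=j)) f \<noteq> (c(e:=j)) g"
    proof (cases "f = e")
      case True
      then have gF: "g \<in> F" and ge: "g \<noteq> e" using fg by auto
      obtain z where z: "z \<in> g" "z = x \<or> z = y" using fg True assms(3) by blast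
      have "c g \<noteq> j" using z gF assms(5,6) unfolding hasc_def by blast
      then show ?thesis using True ge by simp
    next
      case False
      show ?thesis
      proof (cases "g = e")
        case True
        then have fF: "f \<in> F" using fg False by auto
        obtain z where z: "z \<in> f" "z = x \<or> z = y" using fg True assms(3) by blast
        have "c f \<noteq> j" using z fF assms(5,6) unfolding hasc_def by blast
        then show ?thesis using True False by simp
      next
        case False2: False
        then have "f \<in> F" "g \<in> F" using fg False by auto
        then have "c f \<noteq> c g" using fg val unfolding validc_def by blast
        then show ?thesis using False False2 by simp
      qed
    qed
  qed
  have "card (insert e F) = Suc (card F)" using finF assms(2) by simp
  with mx[OF v] show False by simp
qed

definition Rk :: "nat \<Rightarrow> nat \<Rightarrow> 'a \<Rightarrow> 'a \<Rightarrow> bool" where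
  "Rk \<alpha> \<beta> x y \<longleftrightarrow> (\<exists>e\<in>F. e = {x,y} \<and> x \<noteq> y \<and> (c e = \<alpha> \<or> c e = \<beta>))"

lemma kempe:
  assumes "e0 \<in> E" "e0 \<notin> F" "e0 = {u,b}" "\<alpha> < k" "\<beta> < k" "\<alpha> \<noteq> \<beta>"
    "\<not> hasc F c u \<alpha>" "\<not> hasc F c b \<beta>"
  shows "(Rk \<alpha> \<beta>)\<^sup>*\<^sup>* u b"
proof (rule ccontr)
  assume nb: "\<not> (Rk \<alpha> \<beta>)\<^sup>*\<^sup>* u b"
  define K where "K = {x. (Rk \<alpha> \<beta>)\<^sup>*\<^sup>* u x}"
  have uK: "u \<in> K" unfolding K_def by simp
  have bK: "b \<notin> K" using nb unfolding K_def by simp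
  have clos: "f \<subseteq> K" if fF: "f \<in> F" and fc: "c f = \<alpha> \<or> c f = \<beta>" and fK: "f \<inter> K \<noteq> {}" for f
  proof -
    have "f \<in> E" using fF FE by blast
    then obtain x y where xy: "f = {x,y}" "x \<noteq> y" using sg_edge[OF sg] by metis
    have r1: "Rk \<alpha> \<beta> x y" "Rk \<alpha> \<beta> y x" using fF fc xy unfolding Rk_def by (auto simp: insert_commute)
    from fK xy have "x \<in> K \<or> y \<in> K" by blast
    then have "x \<in> K \<and> y \<in> K" using r1 unfolding K_def mem_Collect_eq
      by (meson rtranclp.rtrancl_into_rtrancl)
    then show ?thesis using xy by blast
  qed
  define sw where "sw j = (if j = \<alpha> then \<beta> else if j = \<beta> then \<alpha> else j)" for j
  have swinj: "sw i = sw j \<Longrightarrow> i = j" for i j unfolding sw_def by (auto split: if_splits)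
  define c' where "c' f = (if f \<in> F \<and> (c f = \<alpha> \<or> c f = \<beta>) \<and> f \<inter> K \<noteq> {} then sw (c f) else c f)" for f
  define c'' where "c'' = c'(e0 := \<beta>)"
  have swk: "j < k \<Longrightarrow> sw j < k" for j using assms(4,5) unfolding sw_def by auto
  have keyF: "c' g \<noteq> \<beta>" if g: "g \<in> F" "g \<inter> e0 \<noteq> {}" for g
  proof -
    have "b \<in> g \<or> u \<in> g" using g(2) assms(3) by blast
    then show ?thesis
    proof
      assume "b \<in> g"
      then have ns: "\<not> ((c g = \<alpha> \<or> c g = \<beta>) \<and> g \<inter> K \<noteq> {})" using clos[OF g(1)] bK by blast
      then have "c' g = c g" unfolding c'_def by auto
      moreover have "c g \<noteq> \<beta>" using assms(8) g(1) \<open>b \<in> g\<close> unfolding hasc_def by blast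
      ultimately show ?thesis by simp
    next
      assume "u \<in> g"
      have na: "c g \<noteq> \<alpha>" using assms(7) g(1) \<open>u \<in> g\<close> unfolding hasc_def by blast
      show ?thesis
      proof (cases "c g = \<beta>")
        case True
        then have "c' g = sw \<beta>" using g(1) \<open>u \<in> g\<close> uK unfolding c'_def by auto
        then show ?thesis using assms(6) unfolding sw_def by auto
      next
        case False
        then show ?thesis using na unfolding c'_def sw_def by auto
      qed
    qed
  qed
  have cp_sw: "c' f = sw (c f)" if "f \<in> F" "c f = \<alpha> \<or> c f = \<beta>" "f \<inter> K \<noteq> {}" for f
    using that unfolding c'_def by simp
  have cp_id: "c' f = c f" if "\<not> ((c f = \<alpha> \<or> c f = \<beta>) \<and> f \<inter> K \<noteq> {})" for f
    using that unfolding c'_def by auto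
  have c''e0: "c'' e0 = \<beta>" unfolding c''_def by simp
  have c''F: "f \<noteq> e0 \<Longrightarrow> c'' f = c' f" for f unfolding c''_def by simp
  have swab: "sw j = \<alpha> \<or> sw j = \<beta>" if "j = \<alpha> \<or> j = \<beta>" for j using that unfolding sw_def by auto
  have v: "validc k E (insert e0 F) c''"
    unfolding validc_def
  proof (intro conjI ballI impI)
    show "insert e0 F \<subseteq> E" using assms(1) FE by blast
  next
    fix f assume f: "f \<in> insert e0 F"
    show "c'' f < k"
    proof (cases "f = e0")
      case True then show ?thesis using c''e0 assms(5) by simp
    next
      case False
      then have fF: "f \<in> F" using f by simp
      have ck: "c f < k" using fF val unfolding validc_def by blast
      show ?thesis
      proof (cases "(c f = \<alpha> \<or> c f = \<beta>) \<and> f \<inter> K \<noteq> {}")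
        case True then show ?thesis using cp_sw[OF fF] c''F[OF False] swk[OF ck] by simp
      next
        case nn: False then show ?thesis using cp_id[OF nn] c''F[OF False] ck by simp
      qed
    qed
  next
    fix f g assume fg: "f \<in> insert e0 F" "g \<in> insert e0 F" "f \<noteq> g \<and> f \<inter> g \<noteq> {}"
    show "c'' f \<noteq> c'' g"
    proof (cases "f = e0")
      case True
      then have gF: "g \<in> F" and ge: "g \<noteq> e0" using fg by auto
      have "g \<inter> e0 \<noteq> {}" using fg True by blast
      then have "c' g \<noteq> \<beta>" using keyF[OF gF] by blast
      then show ?thesis using True c''e0 c''F[OF ge] by simp
    next
      case False
      show ?thesis
      proof (cases "g = e0")
        case True
        then have fF: "f \<in> F" using fg False by auto
        have "f \<inter> e0 \<noteq> {}" using fg True by blast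
        then have "c' f \<noteq> \<beta>" using keyF[OF fF] by blast
        then show ?thesis using True c''e0 c''F[OF False] by simp
      next
        case False2: False
        then have fF: "f \<in> F" and gF: "g \<in> F" using fg False by auto
        have cfg: "c f \<noteq> c g" using fg fF gF val unfolding validc_def by blast
        obtain z where z: "z \<in> f" "z \<in> g" using fg by blast
        have "c' f \<noteq> c' g"
        proof (cases "(c f = \<alpha> \<or> c f = \<beta>) \<and> f \<inter> K \<noteq> {}")
          case cf: True
          show ?thesis
          proof (cases "(c g = \<alpha> \<or> c g = \<beta>) \<and> g \<inter> K \<noteq> {}")
            case cg: True
            show ?thesis using cp_sw[OF fF] cp_sw[OF gF] cf cg cfg swinj by metis
          next
            case cg: False
            have "z \<in> K" using clos[OF fF] cf z by blast
            then have ng: "\<not> (c g = \<alpha> \<or> c g = \<beta>)" using cg z by blast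
            have "c' f = \<alpha> \<or> c' f = \<beta>" using cp_sw[OF fF] cf swab by metis
            then show ?thesis using cp_id[OF cg] ng by metis
          qed
        next
          case cf: False
          show ?thesis
          proof (cases "(c g = \<alpha> \<or> c g = \<beta>) \<and> g \<inter> K \<noteq> {}")
            case cg: True
            have "z \<in> K" using clos[OF gF] cg z by blast
            then have nf: "\<not> (c f = \<alpha> \<or> c f = \<beta>)" using cf z by blast
            have "c' g = \<alpha> \<or> c' g = \<beta>" using cp_sw[OF gF] cg swab by metis
            then show ?thesis using cp_id[OF cf] nf by metis
          next
            case cg: False
            show ?thesis using cp_id[OF cf] cp_id[OF cg] cfg by simp
          qed
        qed
        then show ?thesis using c''F[OF False] c''F[OF False2] by simp
      qed
    qed
  qed
  have "card (insert e0 F) = Suc (card F)" using finF assms(2) by simp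
  with mx[OF v] show False by simp
qed


lemma edge_sub: assumes "e \<in> E" shows "e \<subseteq> V"
proof -
  obtain x y where "e = {x,y}" "x \<in> V" "y \<in> V" using sg_edge[OF sg assms] by blast
  then show ?thesis by simp
qed

lemma edge_card: assumes "e \<in> E" shows "card e = 2"
proof -
  obtain x y where "e = {x,y}" "x \<noteq> y" using sg_edge[OF sg assms] by blast
  then show ?thesis by simp
qed

definition Rkc :: "nat \<Rightarrow> 'a \<Rightarrow> 'a \<Rightarrow> bool" where
  "Rkc j x y \<longleftrightarrow> (\<exists>e\<in>F. e = {x,y} \<and> x \<noteq> y \<and> c e = j)"

lemma Rk_iff: "Rk \<alpha> \<beta> x y \<longleftrightarrow> Rkc \<alpha> x y \<or> Rkc \<beta> x y"
  unfolding Rk_def Rkc_def by (intro iffI; elim bexE conjE disjE; blast)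

lemma Rkc_uniq: assumes "Rkc j x y" "Rkc j x z" shows "y = z"
proof -
  obtain e f where e: "e \<in> F" "e = {x,y}" "x \<noteq> y" "c e = j" and f: "f \<in> F" "f = {x,z}" "x \<noteq> z" "c f = j"
    using assms unfolding Rkc_def by blast
  have "e = f" using proper[OF e(1) f(1), of x] e f by simp
  then have "{x,y} = {x,z}" using e f by simp
  then show ?thesis using e(3) f(3) by (auto simp: doubleton_eq_iff)
qed

lemma Rkc_has: "Rkc j x y \<Longrightarrow> hasc F c x j"
  unfolding Rkc_def hasc_def by blast

lemma has_Rkc: assumes "hasc F c x j" obtains y where "Rkc j x y"
proof -
  obtain e where e: "e \<in> F" "x \<in> e" "c e = j" using assms unfolding hasc_def by blast
  have "e \<in> E" using e(1) FE by blast
  then obtain p q where pq: "e = {p,q}" "p \<noteq> q" using sg_edge[OF sg] by metis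
  show ?thesis
  proof (cases "x = p")
    case True
    then have "Rkc j x q" using e pq unfolding Rkc_def by blast
    then show ?thesis using that by blast
  next
    case False
    then have "x = q" using e(2) pq by blast
    then have "Rkc j x p" using e pq unfolding Rkc_def by (auto simp: insert_commute)
    then show ?thesis using that by blast
  qed
qed

definition S :: "'a set" where "S = {v\<in>V. \<forall>j<k. hasc F c v j}"

lemma no_two:
  assumes "u \<in> V" "\<alpha> < k" "\<not> hasc F c u \<alpha>" "\<beta> < k" "hasc F c u \<beta>"
    and e1: "{u,b} \<in> E" "{u,b} \<notin> F" "u \<noteq> b" "\<not> hasc F c b \<beta>"
    and e2: "{u,b2} \<in> E" "{u,b2} \<notin> F" "u \<noteq> b2" "\<not> hasc F c b2 \<beta>"
  shows "b = b2"
proof (rule ccontr)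
  assume nb: "b \<noteq> b2"
  have ab: "\<alpha> \<noteq> \<beta>" using assms(3,5) by blast
  have r1: "(Rk \<alpha> \<beta>)\<^sup>*\<^sup>* u b" using kempe[OF e1(1,2) refl assms(2,4) ab assms(3) e1(4)] .
  have r2: "(Rk \<alpha> \<beta>)\<^sup>*\<^sup>* u b2" using kempe[OF e2(1,2) refl assms(2,4) ab assms(3) e2(4)] .
  obtain a1 where a1: "Rkc \<beta> u a1" using has_Rkc[OF assms(5)] by blast
  show False
  proof (rule no_three_ends[of V "Rk \<alpha> \<beta>" u a1 b b2])
    show "finite V" by (rule finV)
    show "\<forall>x y. Rk \<alpha> \<beta> x y \<longrightarrow> x \<in> V \<and> y \<in> V"
      using FE edge_sub unfolding Rk_def by blast
    show "\<forall>x. \<not> Rk \<alpha> \<beta> x x" unfolding Rk_def by blast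
    show "\<forall>x y. Rk \<alpha> \<beta> x y \<longrightarrow> Rk \<alpha> \<beta> y x" unfolding Rk_def by (auto simp: insert_commute)
    show "\<forall>x y z w. Rk \<alpha> \<beta> x y \<and> Rk \<alpha> \<beta> x z \<and> Rk \<alpha> \<beta> x w \<longrightarrow> y = z \<or> y = w \<or> z = w"
    proof (intro allI impI)
      fix x y z w assume h: "Rk \<alpha> \<beta> x y \<and> Rk \<alpha> \<beta> x z \<and> Rk \<alpha> \<beta> x w"
      then have "Rkc \<alpha> x y \<or> Rkc \<beta> x y" "Rkc \<alpha> x z \<or> Rkc \<beta> x z" "Rkc \<alpha> x w \<or> Rkc \<beta> x w"
        unfolding Rk_iff by auto
      then show "y = z \<or> y = w \<or> z = w"
        by (elim disjE) (blast dest: Rkc_uniq)+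
    qed
    show "Rk \<alpha> \<beta> u a1" using a1 unfolding Rk_iff by blast
    show "\<forall>y. Rk \<alpha> \<beta> u y \<longrightarrow> y = a1"
    proof (intro allI impI)
      fix y assume "Rk \<alpha> \<beta> u y"
      then have "Rkc \<alpha> u y \<or> Rkc \<beta> u y" unfolding Rk_iff .
      moreover have "\<not> Rkc \<alpha> u y" using Rkc_has assms(3) by blast
      ultimately have "Rkc \<beta> u y" by blast
      then show "y = a1" using Rkc_uniq[OF a1] by simp
    qed
    show "b \<noteq> u" using e1(3) by simp
    show "b2 \<noteq> u" using e2(3) by simp
    show "b \<noteq> b2" by fact
    show "(Rk \<alpha> \<beta>)\<^sup>*\<^sup>* u b" by fact
    show "(Rk \<alpha> \<beta>)\<^sup>*\<^sup>* u b2" by fact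
    show "\<forall>y z. Rk \<alpha> \<beta> b y \<and> Rk \<alpha> \<beta> b z \<longrightarrow> y = z"
    proof (intro allI impI)
      fix y z assume h: "Rk \<alpha> \<beta> b y \<and> Rk \<alpha> \<beta> b z"
      have "\<not> Rkc \<beta> b y" "\<not> Rkc \<beta> b z" using Rkc_has e1(4) by blast+
      then have "Rkc \<alpha> b y" "Rkc \<alpha> b z" using h unfolding Rk_iff by blast+
      then show "y = z" by (rule Rkc_uniq)
    qed
    show "\<forall>y z. Rk \<alpha> \<beta> b2 y \<and> Rk \<alpha> \<beta> b2 z \<longrightarrow> y = z"
    proof (intro allI impI)
      fix y z assume h: "Rk \<alpha> \<beta> b2 y \<and> Rk \<alpha> \<beta> b2 z"
      have "\<not> Rkc \<beta> b2 y" "\<not> Rkc \<beta> b2 z" using Rkc_has e2(4) by blast+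
      then have "Rkc \<alpha> b2 y" "Rkc \<alpha> b2 z" using h unfolding Rk_iff by blast+
      then show "y = z" by (rule Rkc_uniq)
    qed
  qed
qed


lemma inj_bound:
  assumes uV: "u \<in> V" and uS: "u \<notin> S"
  shows "card {e\<in>E-F. u \<in> e \<and> e \<inter> S = {}} \<le> card {f\<in>F. u \<in> f}"
proof -
  obtain \<alpha> where al: "\<alpha> < k" "\<not> hasc F c u \<alpha>" using uV uS unfolding S_def by blast
  define NB where "NB = {e\<in>E-F. u \<in> e \<and> e \<inter> S = {}}"
  have oth: "\<exists>b. e = {u,b} \<and> u \<noteq> b \<and> b \<in> V \<and> b \<notin> S" if eN: "e \<in> NB" for e
  proof -
    from eN have eE: "e \<in> E" and ue: "u \<in> e" and eS: "e \<inter> S = {}" unfolding NB_def by auto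
    obtain x y where xy: "e = {x,y}" "x \<noteq> y" "x \<in> V" "y \<in> V" using sg_edge[OF sg eE] by blast
    show ?thesis
    proof (cases "u = x")
      case True
      have "y \<notin> S" using eS xy by blast
      then show ?thesis using xy True by blast
    next
      case False
      then have uy: "u = y" using ue xy by blast
      have "x \<notin> S" using eS xy by blast
      moreover have "e = {u,x}" using xy uy by (simp add: insert_commute)
      ultimately show ?thesis using xy False by blast
    qed
  qed
  define ob where "ob e = (SOME b. e = {u,b} \<and> u \<noteq> b \<and> b \<in> V \<and> b \<notin> S)" for e
  have ob: "e = {u, ob e} \<and> u \<noteq> ob e \<and> ob e \<in> V \<and> ob e \<notin> S" if "e \<in> NB" for e
    unfolding ob_def using someI_ex[OF oth[OF that]] .
  have exmu: "\<exists>\<beta>. \<beta> < k \<and> \<not> hasc F c (ob e) \<beta>" if "e \<in> NB" for e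
    using ob[OF that] unfolding S_def by blast
  define mu where "mu e = (SOME \<beta>. \<beta> < k \<and> \<not> hasc F c (ob e) \<beta>)" for e
  have mu: "mu e < k \<and> \<not> hasc F c (ob e) (mu e)" if "e \<in> NB" for e
    unfolding mu_def using someI_ex[OF exmu[OF that]] .
  have hu: "hasc F c u (mu e)" if eN: "e \<in> NB" for e
  proof (rule ccontr)
    assume nh: "\<not> hasc F c u (mu e)"
    have eE: "e \<in> E" and eF: "e \<notin> F" using eN unfolding NB_def by auto
    have "e = {u, ob e}" using ob[OF eN] by blast
    from add_edge[OF eE eF this] mu[OF eN] nh show False by blast
  qed
  have exg: "\<exists>f. f \<in> F \<and> u \<in> f \<and> c f = mu e" if "e \<in> NB" for e
    using hu[OF that] unfolding hasc_def by blast
  define g where "g e = (SOME f. f \<in> F \<and> u \<in> f \<and> c f = mu e)" for e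
  have g: "g e \<in> F \<and> u \<in> g e \<and> c (g e) = mu e" if "e \<in> NB" for e
    unfolding g_def using someI_ex[OF exg[OF that]] .
  have inj: "inj_on g NB"
  proof (rule inj_onI)
    fix e1 e2 assume e1: "e1 \<in> NB" and e2: "e2 \<in> NB" and eq: "g e1 = g e2"
    have mm: "mu e1 = mu e2" using g[OF e1] g[OF e2] eq by simp
    have o1: "e1 = {u, ob e1}" "u \<noteq> ob e1" using ob[OF e1] by blast+
    have o2: "e2 = {u, ob e2}" "u \<noteq> ob e2" using ob[OF e2] by blast+
    have E1: "e1 \<in> E" "e1 \<notin> F" using e1 unfolding NB_def by auto
    have E2: "e2 \<in> E" "e2 \<notin> F" using e2 unfolding NB_def by auto
    have "ob e1 = ob e2"
    proof (rule no_two[of u \<alpha> "mu e1" "ob e1" "ob e2"])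
      show "u \<in> V" by fact
      show "\<alpha> < k" by fact
      show "\<not> hasc F c u \<alpha>" by fact
      show "mu e1 < k" using mu[OF e1] by blast
      show "hasc F c u (mu e1)" using hu[OF e1] .
      show "{u, ob e1} \<in> E" using E1 o1 by simp
      show "{u, ob e1} \<notin> F" using E1 o1 by simp
      show "u \<noteq> ob e1" by fact
      show "\<not> hasc F c (ob e1) (mu e1)" using mu[OF e1] by blast
      show "{u, ob e2} \<in> E" using E2 o2 by simp
      show "{u, ob e2} \<notin> F" using E2 o2 by simp
      show "u \<noteq> ob e2" by fact
      show "\<not> hasc F c (ob e2) (mu e1)" using mu[OF e2] mm by simp
    qed
    then show "e1 = e2" using o1 o2 by simp
  qed
  have sub: "g ` NB \<subseteq> {f\<in>F. u \<in> f}" using g by blast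
  have fin: "finite {f\<in>F. u \<in> f}" using finF by simp
  show ?thesis using card_inj_on_le[OF inj sub fin] unfolding NB_def .
qed

lemma S_bound: assumes "v \<in> S" shows "k \<le> card {f\<in>F. v \<in> f}"
proof -
  have all: "\<forall>j<k. hasc F c v j" using assms unfolding S_def by simp
  have ex: "\<exists>f. f \<in> F \<and> v \<in> f \<and> c f = j" if "j < k" for j
  proof -
    have "hasc F c v j" using all that by simp
    then obtain f where "f \<in> F" "v \<in> f" "c f = j" unfolding hasc_def by blast
    then show ?thesis by blast
  qed
  define h where "h j = (SOME f. f \<in> F \<and> v \<in> f \<and> c f = j)" for j
  have h: "h j \<in> F \<and> v \<in> h j \<and> c (h j) = j" if "j < k" for j
    unfolding h_def using someI_ex[OF ex[OF that]] .
  have inj: "inj_on h {0..<k}"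
  proof (rule inj_onI)
    fix i j assume i: "i \<in> {0..<k}" and j: "j \<in> {0..<k}" and eq: "h i = h j"
    have ik: "i < k" using i by simp
    have jk: "j < k" using j by simp
    have 1: "c (h i) = i" using h[OF ik] by blast
    have 2: "c (h j) = j" using h[OF jk] by blast
    have "i = c (h i)" using 1 by (rule sym)
    also have "\<dots> = c (h j)" using eq by (rule arg_cong)
    also have "\<dots> = j" by (rule 2)
    finally show "i = j" .
  qed
  have sub: "h ` {0..<k} \<subseteq> {f\<in>F. v \<in> f}"
  proof (rule image_subsetI)
    fix j assume "j \<in> {0..<k}"
    then have "j < k" by simp
    then have "h j \<in> F" "v \<in> h j" using h by blast+
    then show "h j \<in> {f\<in>F. v \<in> f}" by blast
  qed
  have fin: "finite {f\<in>F. v \<in> f}" using finF by simp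
  have "card {0..<k} \<le> card {f\<in>F. v \<in> f}"
    using card_inj_on_le[OF inj sub fin] .
  then show ?thesis by simp
qed

lemma core_bound: "k * card S + card {e\<in>E. e \<inter> S = {}} \<le> 2 * card F"
proof -
  define FA where "FA v = {f\<in>F. v \<in> f}" for v
  have tot: "(\<Sum>v\<in>V. card (FA v)) = 2 * card F"
    unfolding FA_def
  proof (rule dcount[OF finV finF])
    show "\<forall>e\<in>F. e \<subseteq> V \<and> card e = 2" using FE edge_sub edge_card by blast
  qed
  have SV: "S \<subseteq> V" unfolding S_def by blast
  have Ssum: "k * card S \<le> (\<Sum>v\<in>S. card (FA v))"
  proof -
    have "(\<Sum>v\<in>S. k) \<le> (\<Sum>v\<in>S. card (FA v))"
      by (rule sum_mono) (simp add: FA_def S_bound)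
    then show ?thesis by (simp add: mult.commute)
  qed
  define AU where "AU = {e\<in>E. e \<inter> S = {}}"
  define W where "W = V - S"
  have finW: "finite W" unfolding W_def using finV by simp
  have finAU: "finite AU" unfolding AU_def using finE by simp
  have AUW: "\<forall>e\<in>AU. e \<subseteq> W \<and> card e = 2"
    unfolding AU_def W_def using edge_sub edge_card by blast
  have d1: "(\<Sum>v\<in>W. card {e\<in>AU\<inter>F. v \<in> e}) = 2 * card (AU\<inter>F)"
    by (rule dcount[OF finW]) (use finAU AUW in auto)
  have d2: "(\<Sum>v\<in>W. card {e\<in>AU-F. v \<in> e}) = 2 * card (AU-F)"
    by (rule dcount[OF finW]) (use finAU AUW in auto)
  have b1: "(\<Sum>v\<in>W. card {e\<in>AU\<inter>F. v \<in> e}) \<le> (\<Sum>v\<in>W. card (FA v))"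
  proof (rule sum_mono)
    fix v assume "v \<in> W"
    have "{e\<in>AU\<inter>F. v \<in> e} \<subseteq> FA v" unfolding FA_def by blast
    then show "card {e\<in>AU\<inter>F. v \<in> e} \<le> card (FA v)"
      using finF unfolding FA_def by (intro card_mono) auto
  qed
  have b2: "(\<Sum>v\<in>W. card {e\<in>AU-F. v \<in> e}) \<le> (\<Sum>v\<in>W. card (FA v))"
  proof (rule sum_mono)
    fix v assume vW: "v \<in> W"
    have eq: "{e\<in>AU-F. v \<in> e} = {e\<in>E-F. v \<in> e \<and> e \<inter> S = {}}" unfolding AU_def by blast
    have "v \<in> V" "v \<notin> S" using vW unfolding W_def by auto
    from inj_bound[OF this] show "card {e\<in>AU-F. v \<in> e} \<le> card (FA v)"
      unfolding eq FA_def .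
  qed
  have cAU: "card AU = card (AU\<inter>F) + card (AU-F)" using card_Int_Diff[OF finAU] .
  have split: "(\<Sum>v\<in>V. card (FA v)) = (\<Sum>v\<in>W. card (FA v)) + (\<Sum>v\<in>S. card (FA v))"
    unfolding W_def using sum.subset_diff[OF SV finV] .
  have "2 * card AU \<le> 2 * (\<Sum>v\<in>W. card (FA v))" using cAU d1 d2 b1 b2 by linarith
  then have "card AU \<le> (\<Sum>v\<in>W. card (FA v))" by simp
  then show ?thesis using tot split Ssum unfolding AU_def by linarith
qed

end

lemma exists_maxcol:
  assumes sg: "simple_graph V E"
  shows "\<exists>F c. maxcol V E k F c"
proof -
  define CS where "CS = {card F | F. \<exists>c. validc k E F c}"
  have finE: "finite E" using sg_finite[OF sg] .
  have "CS \<subseteq> {..card E}"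
  proof
    fix n assume "n \<in> CS"
    then obtain F c where "n = card F" "validc k E F c" unfolding CS_def by blast
    then have "F \<subseteq> E" "n = card F" unfolding validc_def by blast+
    then show "n \<in> {..card E}" using card_mono[OF finE] by simp
  qed
  then have finCS: "finite CS" using finite_subset by blast
  have "validc k E {} (\<lambda>_. 0)" unfolding validc_def by simp
  then have "0 \<in> CS" unfolding CS_def by force
  then have "Max CS \<in> CS" using finCS Max_in by blast
  then obtain F c where Fc: "card F = Max CS" "validc k E F c" unfolding CS_def by auto
  have "maxcol V E k F c"
  proof
    show "simple_graph V E" by fact
    show "validc k E F c" by fact
    fix F' c' assume "validc k E F' c'"
    then have "card F' \<in> CS" unfolding CS_def by blast
    then show "card F' \<le> card F" using Fc(1) Max_ge[OF finCS] by simp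
  qed
  then show ?thesis by blast
qed

lemma core:
  assumes sg: "simple_graph V E"
  shows "\<exists>F c X. validc k E F c \<and> X \<subseteq> V \<and> k * card X + card {e\<in>E. e \<inter> X = {}} \<le> 2 * card F"
proof -
  obtain F c where m: "maxcol V E k F c" using exists_maxcol[OF sg] by blast
  have "validc k E F c" using m unfolding maxcol_def by blast
  moreover have "maxcol.S V k F c \<subseteq> V" using m unfolding maxcol.S_def[OF m] by blast
  moreover have "k * card (maxcol.S V k F c) + card {e\<in>E. e \<inter> maxcol.S V k F c = {}} \<le> 2 * card F"
    using maxcol.core_bound[OF m] .
  ultimately show ?thesis by blast
qed

lemma tri3:
  assumes "x \<noteq> y" "y \<noteq> z" "x \<noteq> z"
  shows "tri_edges {x,y,z} = {{x,y},{x,z},{y,z}}"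
proof
  show "tri_edges {x,y,z} \<subseteq> {{x,y},{x,z},{y,z}}"
  proof
    fix e assume "e \<in> tri_edges {x,y,z}"
    then have sub: "e \<subseteq> {x,y,z}" and c2: "card e = 2" unfolding tri_edges_def by auto
    obtain p q where pq: "e = {p,q}" "p \<noteq> q" using c2 card_2_iff by metis
    have p: "p = x \<or> p = y \<or> p = z" and q: "q = x \<or> q = y \<or> q = z" using sub pq by auto
    from p q pq(2) show "e \<in> {{x,y},{x,z},{y,z}}" unfolding pq(1)
      by (elim disjE) (simp_all add: insert_commute)
  qed
next
  show "{{x,y},{x,z},{y,z}} \<subseteq> tri_edges {x,y,z}"
    unfolding tri_edges_def using assms by auto
qed

lemma pair_tri: "finite t \<Longrightarrow> {a,b} \<subseteq> t \<Longrightarrow> a \<noteq> b \<Longrightarrow> {a,b} \<in> tri_edges t"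
  unfolding tri_edges_def by simp

context
  fixes V :: "'a set" and E :: "'a set set" and k :: nat
begin

abbreviation "G \<equiv> join_edges (indep_vertices k) {} V E"

lemma G_mem: "x \<in> G \<longleftrightarrow> (\<exists>a\<in>E. x = Inr ` a) \<or> (\<exists>i v. x = {Inl i, Inr v} \<and> i < k \<and> v \<in> V)"
  unfolding join_edges_def indep_vertices_def by auto

lemma GLL: "{Inl i, Inl j} \<notin> (G :: (nat + 'a) set set)"
proof
  assume "{Inl i, Inl j} \<in> (G :: (nat + 'a) set set)"
  then have "(\<exists>a\<in>E. {Inl i, Inl j} = Inr ` a) \<or> (\<exists>i' v. {Inl i, Inl j} = {Inl i', Inr v} \<and> i' < k \<and> v \<in> V)"
    using G_mem[of "{Inl i, Inl j}"] by (rule iffD1[rotated])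
  then show False
  proof (elim disjE bexE exE conjE)
    fix a assume "a \<in> E" and a2: "{Inl i, Inl j} = Inr ` a"
    have "Inl i \<in> Inr ` a" by (simp add: a2[symmetric])
    then show False by auto
  next
    fix i' v assume "{Inl i, Inl j} = {Inl i', Inr v}"
    then show False by (simp add: doubleton_eq_iff)
  qed
qed

lemma GLR: assumes "{Inl i, Inr v} \<in> G" shows "i < k \<and> v \<in> V"
proof -
  from assms have "(\<exists>a\<in>E. {Inl i, Inr v} = Inr ` a) \<or> (\<exists>i' v'. {Inl i, Inr v} = {Inl i', Inr v'} \<and> i' < k \<and> v' \<in> V)"
    using G_mem[of "{Inl i, Inr v}"] by (rule iffD1[rotated])
  then show ?thesis
  proof (elim disjE bexE exE conjE)
    fix a assume "a \<in> E" and a2: "{Inl i, Inr v} = Inr ` a"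
    have "Inl i \<in> Inr ` a" by (simp add: a2[symmetric])
    then show ?thesis by auto
  next
    fix i' v' assume b: "{Inl i, Inr v} = {Inl i', Inr v'}" "i' < k" "v' \<in> V"
    then have "i = i' \<and> v = v'" by (simp add: doubleton_eq_iff)
    then show ?thesis using b by simp
  qed
qed

lemma GRR: assumes "{Inr a, Inr b} \<in> G" shows "{a,b} \<in> E"
proof -
  from assms show ?thesis
    unfolding G_mem
  proof (elim disjE bexE exE conjE)
    fix a' assume a1: "a' \<in> E" and a2: "{Inr a, Inr b} = (Inr ` a' :: (nat + 'a) set)"
    have "(Inr a :: nat + 'a) \<in> Inr ` a'" by (simp add: a2[symmetric])
    then have 1: "a \<in> a'" by auto
    have "(Inr b :: nat + 'a) \<in> Inr ` a'" by (simp add: a2[symmetric])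
    then have 2: "b \<in> a'" by auto
    have 3: "x = a \<or> x = b" if "x \<in> a'" for x
    proof -
      have "(Inr x :: nat + 'a) \<in> Inr ` a'" using that by simp
      then have "(Inr x :: nat + 'a) \<in> {Inr a, Inr b}" by (simp only: a2)
      then show ?thesis by simp
    qed
    have "{a,b} = a'" using 1 2 3 by blast
    then show ?thesis using a1 by simp
  next
    fix i' v' assume "{Inr a, Inr b} = ({Inl i', Inr v'} :: (nat + 'a) set)"
    then show ?thesis by (simp add: doubleton_eq_iff)
  qed
qed

lemma sum_cases: "(\<exists>i. s = Inl i) \<or> (\<exists>a. s = Inr a)"
  by (cases s) auto

lemma tri_char:
  assumes tf: "triangle_free E" and t: "t \<in> triangles (G :: (nat + 'a) set set)"
  shows "\<exists>i u v. t = {Inl i, Inr u, Inr v} \<and> i < k \<and> {u,v} \<in> E"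
proof -
  have c3: "card t = 3" and te: "tri_edges t \<subseteq> G" using t unfolding triangles_def by auto
  obtain x y z where xyz: "t = {x,y,z}" "x \<noteq> y" "y \<noteq> z" "x \<noteq> z" using c3 card_3_iff by metis
  have tt: "tri_edges t = {{x,y},{x,z},{y,z}}" unfolding xyz(1) by (rule tri3[OF xyz(2-4)])
  have e1: "{x,y} \<in> G" and e2: "{x,z} \<in> G" and e3: "{y,z} \<in> G" using te unfolding tt by auto
  show ?thesis
  proof (cases "\<exists>i. x = Inl i")
    case True
    then obtain i where xi: "x = Inl i" by blast
    show ?thesis
    proof (cases "\<exists>j. y = Inl j")
      case True
      then obtain j where "y = Inl j" by blast
      then show ?thesis using e1 xi GLL[of i j] by simp
    next
      case False
      then obtain a where ya: "y = Inr a" using sum_cases[of y] by blast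
      show ?thesis
      proof (cases "\<exists>j. z = Inl j")
        case True
        then obtain j where "z = Inl j" by blast
        then show ?thesis using e2 xi GLL[of i j] by simp
      next
        case False
        then obtain b where zb: "z = Inr b" using sum_cases[of z] by blast
        have "i < k" using GLR[of i a] e1 xi ya by simp
        moreover have "{a,b} \<in> E" using GRR[of a b] e3 ya zb by simp
        ultimately show ?thesis using xyz(1) xi ya zb by (intro exI[of _ i] exI[of _ a] exI[of _ b]) simp
      qed
    qed
  next
    case False
    then obtain a where xa: "x = Inr a" using sum_cases[of x] by blast
    show ?thesis
    proof (cases "\<exists>i. y = Inl i")
      case True
      then obtain i where yi: "y = Inl i" by blast
      show ?thesis
      proof (cases "\<exists>j. z = Inl j")
        case True
        then obtain j where "z = Inl j" by blast
        then show ?thesis using e3 yi GLL[of i j] by simp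
      next
        case False
        then obtain b where zb: "z = Inr b" using sum_cases[of z] by blast
        have "{Inl i, Inr a} \<in> G" using e1 xa yi by (simp add: insert_commute)
        then have "i < k" using GLR[of i a] by simp
        moreover have "{a,b} \<in> E" using GRR[of a b] e2 xa zb by simp
        moreover have "t = {Inl i, Inr a, Inr b}" using xyz(1) xa yi zb by (simp add: insert_commute)
        ultimately show ?thesis by (intro exI[of _ i] exI[of _ a] exI[of _ b]) simp
      qed
    next
      case False
      then obtain b where yb: "y = Inr b" using sum_cases[of y] by blast
      show ?thesis
      proof (cases "\<exists>i. z = Inl i")
        case True
        then obtain i where zi: "z = Inl i" by blast
        have "{Inl i, Inr a} \<in> G" using e2 xa zi by (simp add: insert_commute)
        then have "i < k" using GLR[of i a] by simp
        moreover have "{a,b} \<in> E" using GRR[of a b] e1 xa yb by simp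
        moreover have "t = {Inl i, Inr a, Inr b}" using xyz(1) xa yb zi by (simp add: insert_commute)
        ultimately show ?thesis by (intro exI[of _ i] exI[of _ a] exI[of _ b]) simp
      next
        case False
        then obtain d where zd: "z = Inr d" using sum_cases[of z] by blast
        have ab: "{a,b} \<in> E" using GRR[of a b] e1 xa yb by simp
        have ad: "{a,d} \<in> E" using GRR[of a d] e2 xa zd by simp
        have bd: "{b,d} \<in> E" using GRR[of b d] e3 yb zd by simp
        have d1: "a \<noteq> b" "b \<noteq> d" "a \<noteq> d" using xyz(2-4) xa yb zd by auto
        have "{a,b,d} \<in> triangles E"
          unfolding triangles_def using tri3[OF d1] ab ad bd d1 by auto
        then show ?thesis using tf unfolding triangle_free_def by simp
      qed
    qed
  qed
qed

lemma tau_le: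
  assumes sg: "simple_graph V E" and tf: "triangle_free E" and XV: "X \<subseteq> V"
  shows "tau (G :: (nat + 'a) set set) \<le> k * card X + card {e\<in>E. e \<inter> X = {}}"
proof -
  define D1 :: "(nat + 'a) set set" where "D1 = (\<lambda>(i,x). {Inl i, Inr x}) ` ({0..<k} \<times> X)"
  define D2 :: "(nat + 'a) set set" where "D2 = (\<lambda>e. Inr ` e) ` {e\<in>E. e \<inter> X = {}}"
  define D where "D = D1 \<union> D2"
  have finV: "finite V" using sg unfolding simple_graph_def by simp
  have finX: "finite X" using finV XV finite_subset by blast
  have finE: "finite E" using sg_finite[OF sg] .
  have D1G: "D1 \<subseteq> G"
  proof
    fix d assume "d \<in> D1"
    then obtain i x where ix: "d = {Inl i, Inr x}" "i < k" "x \<in> X" unfolding D1_def by auto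
    have "x \<in> V" using ix(3) XV by blast
    then have "\<exists>i' v. d = {Inl i', Inr v} \<and> i' < k \<and> v \<in> V" using ix by (intro exI[of _ i] exI[of _ x]) simp
    then show "d \<in> G" unfolding G_mem by (rule disjI2)
  qed
  have D2G: "D2 \<subseteq> G"
  proof
    fix d assume "d \<in> D2"
    then obtain e where de: "d = Inr ` e" "e \<in> E" unfolding D2_def by auto
    then have "\<exists>a\<in>E. d = Inr ` a" by (intro bexI[of _ e]) simp_all
    then show "d \<in> G" unfolding G_mem by (rule disjI1)
  qed
  have DG: "D \<subseteq> G" unfolding D_def using D1G D2G by blast
  have tf2: "triangle_free (G - D)"
    unfolding triangle_free_def
  proof (rule ccontr)
    assume "triangles (G - D) \<noteq> {}"
    then obtain t where t: "t \<in> triangles (G - D)" by blast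
    have tD: "tri_edges t \<subseteq> G - D" and fint: "finite t" and c3: "card t = 3"
      using t unfolding triangles_def by simp_all
    have "tri_edges t \<subseteq> G" using tD by (rule subset_trans) (rule Diff_subset)
    then have "t \<in> triangles G" unfolding triangles_def using fint c3 by simp
    then obtain i u v where tuv: "t = {Inl i, Inr u, Inr v}" "i < k" "{u,v} \<in> E"
      using tri_char[OF tf] by blast
    have uv: "u \<noteq> v"
    proof -
      obtain p q where pq: "{u,v} = {p,q}" "p \<noteq> q" "p \<in> V" "q \<in> V" by (rule sg_edge[OF sg tuv(3)])
      have "(u = p \<and> v = q) \<or> (u = q \<and> v = p)" using pq(1) by (simp add: doubleton_eq_iff)
      then show ?thesis using pq(2) by blast
    qed
    consider (U) "u \<in> X" | (W) "v \<in> X" | (N) "{u,v} \<inter> X = {}" by blast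
    then show False
    proof cases
      case U
      have "{Inl i, Inr u} \<in> D1" unfolding D1_def by (rule image_eqI[of _ _ "(i,u)"]) (use U tuv(2) in auto)
      moreover have "{Inl i, Inr u} \<in> tri_edges t" using pair_tri[OF fint] tuv(1) by simp
      ultimately show False using tD unfolding D_def by blast
    next
      case W
      have "{Inl i, Inr v} \<in> D1" unfolding D1_def by (rule image_eqI[of _ _ "(i,v)"]) (use W tuv(2) in auto)
      moreover have "{Inl i, Inr v} \<in> tri_edges t" using pair_tri[OF fint] tuv(1) by simp
      ultimately show False using tD unfolding D_def by blast
    next
      case N
      have "Inr ` {u,v} \<in> D2" unfolding D2_def by (rule image_eqI[of _ _ "{u,v}"]) (use N tuv(3) in auto)
      moreover have "({Inr u, Inr v} :: (nat + 'a) set) \<in> tri_edges t" using pair_tri[OF fint] tuv(1) uv by simp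
      ultimately have "({Inr u, Inr v} :: (nat + 'a) set) \<in> D2" "({Inr u, Inr v} :: (nat + 'a) set) \<in> tri_edges t" by simp_all
      then show False using tD unfolding D_def by blast
    qed
  qed
  have "tau G \<le> card D"
    unfolding tau_def by (rule Least_le) (intro exI[of _ D] conjI DG refl tf2)
  also have "\<dots> \<le> card D1 + card D2" unfolding D_def by (rule card_Un_le)
  finally have t1: "tau G \<le> card D1 + card D2" .
  have c1: "card D1 \<le> k * card X"
  proof -
    have "card D1 \<le> card ({0..<k} \<times> X)" unfolding D1_def using finX by (intro card_image_le) simp
    also have "\<dots> = k * card X" by (simp add: card_cartesian_product)
    finally show ?thesis .
  qed
  have c2: "card D2 \<le> card {e\<in>E. e \<inter> X = {}}" unfolding D2_def using finE by (intro card_image_le) simp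
  show ?thesis using t1 c1 c2 by linarith
qed

lemma nu_ge:
  assumes sg: "simple_graph V E" and tf: "triangle_free E" and val: "validc k E F c"
  shows "card F \<le> nu (G :: (nat + 'a) set set)"
proof -
  have FE: "F \<subseteq> E" and ck: "\<And>e. e \<in> F \<Longrightarrow> c e < k" using val unfolding validc_def by blast+
  have prp: "e = f" if "e \<in> F" "f \<in> F" "x \<in> e" "x \<in> f" "c e = c f" for e f x
  proof (rule ccontr)
    assume "e \<noteq> f"
    moreover have "e \<inter> f \<noteq> {}" using that(3,4) by blast
    ultimately have "c e \<noteq> c f" using val that(1,2) unfolding validc_def by blast
    then show False using that(5) by simp
  qed
  have esub: "e \<subseteq> V" if eE: "e \<in> E" for e
  proof -
    obtain p q where "e = {p,q}" "p \<noteq> q" "p \<in> V" "q \<in> V" by (rule sg_edge[OF sg eE])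
    then show ?thesis by simp
  qed
  define te :: "'a set \<Rightarrow> (nat + 'a) set" where "te e = insert (Inl (c e)) (Inr ` e)" for e
  have tri_te: "tri_edges (te e) = {{Inl (c e), Inr a}, {Inl (c e), Inr b}, {Inr a, Inr b}}"
    if "e = {a,b}" "a \<noteq> b" for e a b
  proof -
    have "te e = {Inl (c e), Inr a, Inr b}" using that(1) by (simp add: te_def)
    moreover have "tri_edges {Inl (c e), Inr a, Inr b} = {{Inl (c e), Inr a}, {Inl (c e), Inr b}, {Inr a, Inr b}}"
      by (rule tri3) (use that(2) in simp_all)
    ultimately show ?thesis by simp
  qed
  have char: "x = Inr ` e \<or> (\<exists>w\<in>e. x = {Inl (c e), Inr w})" if eF: "e \<in> F" and xe: "x \<in> tri_edges (te e)" for e x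
  proof -
    have "e \<in> E" using eF FE by blast
    obtain a b where ab: "e = {a,b}" "a \<noteq> b" "a \<in> V" "b \<in> V" by (rule sg_edge[OF sg \<open>e \<in> E\<close>])
    have "x \<in> {{Inl (c e), Inr a}, {Inl (c e), Inr b}, {Inr a, Inr b}}" using xe tri_te[OF ab(1,2)] by simp
    then have "x = {Inl (c e), Inr a} \<or> x = {Inl (c e), Inr b} \<or> x = {Inr a, Inr b}" by simp
    then show ?thesis
    proof (elim disjE)
      assume "x = {Inl (c e), Inr a}"
      moreover have "a \<in> e" using ab(1) by simp
      ultimately show ?thesis by blast
    next
      assume "x = {Inl (c e), Inr b}"
      moreover have "b \<in> e" using ab(1) by simp
      ultimately show ?thesis by blast
    next
      assume "x = {Inr a, Inr b}"
      then have "x = Inr ` e" using ab(1) by simp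
      then show ?thesis by (rule disjI1)
    qed
  qed
  have tri_in: "te e \<in> triangles G" if eF: "e \<in> F" for e
  proof -
    have eE: "e \<in> E" using eF FE by blast
    obtain a b where ab: "e = {a,b}" "a \<noteq> b" "a \<in> V" "b \<in> V" by (rule sg_edge[OF sg eE])
    have tee: "te e = {Inl (c e), Inr a, Inr b}" using ab(1) by (simp add: te_def)
    have c3: "card (te e) = 3" using tee ab(2) by simp
    have g1: "{Inl (c e), Inr a} \<in> G"
    proof -
      have "\<exists>i' v. {Inl (c e), Inr a} = {Inl i', Inr v} \<and> i' < k \<and> v \<in> V"
        using ck[OF eF] ab(3) by (intro exI[of _ "c e"] exI[of _ a]) simp
      then show ?thesis unfolding G_mem by (rule disjI2)
    qed
    have g2: "{Inl (c e), Inr b} \<in> G"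
    proof -
      have "\<exists>i' v. {Inl (c e), Inr b} = {Inl i', Inr v} \<and> i' < k \<and> v \<in> V"
        using ck[OF eF] ab(4) by (intro exI[of _ "c e"] exI[of _ b]) simp
      then show ?thesis unfolding G_mem by (rule disjI2)
    qed
    have g3: "{Inr a, Inr b} \<in> G"
    proof -
      have "\<exists>a'\<in>E. ({Inr a, Inr b} :: (nat + 'a) set) = Inr ` a'"
        using eE ab(1) by (intro bexI[of _ e]) simp_all
      then show ?thesis unfolding G_mem by (rule disjI1)
    qed
    have "tri_edges (te e) \<subseteq> G" unfolding tri_te[OF ab(1,2)] using g1 g2 g3 by simp
    then show ?thesis unfolding triangles_def using c3 tee by simp
  qed
  have disj: "tri_edges (te e) \<inter> tri_edges (te f) = {}" if eF: "e \<in> F" and fF: "f \<in> F" and ne: "e \<noteq> f" for e f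
  proof (rule ccontr)
    assume "tri_edges (te e) \<inter> tri_edges (te f) \<noteq> {}"
    then obtain x where xe: "x \<in> tri_edges (te e)" and xf: "x \<in> tri_edges (te f)" by blast
    have ce: "x = Inr ` e \<or> (\<exists>w\<in>e. x = {Inl (c e), Inr w})" by (rule char[OF eF xe])
    have cf: "x = Inr ` f \<or> (\<exists>w\<in>f. x = {Inl (c f), Inr w})" by (rule char[OF fF xf])
    show False
    proof (cases "x = Inr ` e")
      case T1: True
      show False
      proof (cases "x = Inr ` f")
        case True
        then have "(Inr ` e :: (nat + 'a) set) = Inr ` f" using T1 by simp
        then have "e = f" by (simp add: inj_image_eq_iff)
        then show False using ne by simp
      next
        case False
        then obtain w where "w \<in> f" "x = {Inl (c f), Inr w}" using cf by blast
        then have "Inl (c f) \<in> x" by simp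
        then have "(Inl (c f) :: nat + 'a) \<in> Inr ` e" using T1 by simp
        then show False by auto
      qed
    next
      case F1: False
      then obtain w where w: "w \<in> e" "x = {Inl (c e), Inr w}" using ce by blast
      show False
      proof (cases "x = Inr ` f")
        case True
        have "Inl (c e) \<in> x" using w(2) by simp
        then have "(Inl (c e) :: nat + 'a) \<in> Inr ` f" using True by simp
        then show False by auto
      next
        case False
        then obtain w' where w': "w' \<in> f" "x = {Inl (c f), Inr w'}" using cf by blast
        have "({Inl (c e), Inr w} :: (nat + 'a) set) = {Inl (c f), Inr w'}" using w(2) w'(2) by simp
        then have "c e = c f \<and> w = w'" by (simp add: doubleton_eq_iff)
        then have "e = f" using prp[OF eF fF w(1)] w'(1) by simp
        then show False using ne by simp
      qed
    qed
  qed
  have memte: "(Inr x \<in> te e) = (x \<in> e)" for x e by (auto simp: te_def)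
  have inj: "inj_on te F"
  proof (rule inj_onI)
    fix e f assume "e \<in> F" "f \<in> F" "te e = te f"
    then have "\<forall>x. (x \<in> e) = (x \<in> f)" using memte by metis
    then show "e = f" by blast
  qed
  define T where "T = te ` F"
  have edt: "edge_disjoint_triangles G T"
    unfolding edge_disjoint_triangles_def
  proof (intro conjI ballI impI)
    show "T \<subseteq> triangles G" unfolding T_def using tri_in by blast
  next
    fix s t assume "s \<in> T" "t \<in> T" "s \<noteq> t"
    then obtain e f where "e \<in> F" "f \<in> F" "s = te e" "t = te f" unfolding T_def by blast
    moreover have "e \<noteq> f" using calculation \<open>s \<noteq> t\<close> by blast
    ultimately show "tri_edges s \<inter> tri_edges t = {}" using disj by simp
  qed
  have cT: "card T = card F" unfolding T_def by (rule card_image[OF inj])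
  have finV: "finite V" using sg unfolding simple_graph_def by simp
  have triSub: "triangles G \<subseteq> Pow (Inl ` {0..<k} \<union> Inr ` V)"
  proof
    fix t assume "t \<in> triangles G"
    then obtain i u v where tuv: "t = {Inl i, Inr u, Inr v}" "i < k" "{u,v} \<in> E"
      using tri_char[OF tf] by blast
    have "{u,v} \<subseteq> V" by (rule esub[OF tuv(3)])
    then show "t \<in> Pow (Inl ` {0..<k} \<union> Inr ` V)" using tuv(1,2) by auto
  qed
  have finTri: "finite (triangles G)"
  proof (rule finite_subset[OF triSub])
    show "finite (Pow (Inl ` {0..<k} \<union> Inr ` V))" using finV by simp
  qed
  have finS: "finite {card T | T. edge_disjoint_triangles G T}"
  proof (rule finite_subset)
    show "{card T | T. edge_disjoint_triangles G T} \<subseteq> card ` Pow (triangles G)"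
      unfolding edge_disjoint_triangles_def by blast
    show "finite (card ` Pow (triangles G))" using finTri by simp
  qed
  have "card T \<in> {card T | T. edge_disjoint_triangles G T}" using edt by blast
  then have "card T \<le> nu G" unfolding nu_def using finS by (simp add: Max_ge)
  then show ?thesis using cT by simp
qed

end

theorem mainTheorem9:
  fixes V :: "'a set" and E :: "'a set set" and k :: nat
  assumes "simple_graph V E"
    and "triangle_free E"
    and "k \<ge> 1"
  shows "tau (join_edges (indep_vertices k) {} V E)
         \<le> 2 * nu (join_edges (indep_vertices k) {} V E)"
proof -
  obtain F c X where FcX: "validc k E F c" "X \<subseteq> V"
      "k * card X + card {e\<in>E. e \<inter> X = {}} \<le> 2 * card F"
    using core[OF assms(1)] by blast
  have "tau (join_edges (indep_vertices k) {} V E) \<le> k * card X + card {e\<in>E. e \<inter> X = {}}"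
    by (rule tau_le[OF assms(1,2) FcX(2)])
  also have "\<dots> \<le> 2 * card F" by (rule FcX(3))
  also have "\<dots> \<le> 2 * nu (join_edges (indep_vertices k) {} V E)"
    using nu_ge[OF assms(1,2) FcX(1)] by simp
  finally show ?thesis .
qed

end
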